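(* Let $A$ be a commutative ring. Then $A$ is a $\mathrm{GE}_2$-ring if and only if the graph $\Gamma(A)$ is path-connected.
   Context: $\Gamma(A)$ is the graph whose vertices are classes of unimodular rows $(a,b)\in A^2$ modulo multiplication by units, with $\{[u],[v]\}$ an edge when the matrix with rows $u,v$ lies in $\mathrm{GL}_2(A)$. $\mathrm{GE}_2(A)$ is the subgroup of $\mathrm{GL}_2(A)$ generated by elementary matrices and invertible diagonal matrices; $A$ is a $\mathrm{GE}_2$-ring if $\mathrm{GE}_2(A)=\mathrm{GL}_2(A)$ (equivalently, $\mathrm{SL}_2(A)$ is generated by elementary matrices). *)

theory Defs
  imports Main
begin

datatype 'a mat2 = M2 'a 'a 'a 'a  (* M2 a b c d = [[a,b],[c,d]] *)

fun mat2_mult :: "'a::comm_ring_1 mat2 \<Rightarrow> 'a mat2 \<Rightarrow> 'a mat2" where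
  "mat2_mult (M2 a b c d) (M2 e f g h) =
     M2 (a*e + b*g) (a*f + b*h) (c*e + d*g) (c*f + d*h)"

definition mat2_one :: "'a::comm_ring_1 mat2" where
  "mat2_one = M2 1 0 0 1"

fun det2 :: "'a::comm_ring_1 mat2 \<Rightarrow> 'a" where
  "det2 (M2 a b c d) = a*d - b*c"

definition GL2 :: "'a::comm_ring_1 mat2 set" where
  "GL2 = {m. \<exists>m'. mat2_mult m m' = mat2_one \<and> mat2_mult m' m = mat2_one}"

definition GE2_gens :: "'a::comm_ring_1 mat2 set" where
  "GE2_gens = {M2 1 x 0 1 | x. True} \<union> {M2 1 0 x 1 | x. True}
             \<union> {M2 u 0 0 v | u v. u dvd 1 \<and> v dvd 1}"

definition GE2 :: "'a::comm_ring_1 mat2 set" where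
  "GE2 = \<Inter> {H. H \<subseteq> GL2 \<and> mat2_one \<in> H \<and> GE2_gens \<subseteq> H
              \<and> (\<forall>x\<in>H. \<forall>y\<in>H. mat2_mult x y \<in> H)
              \<and> (\<forall>x\<in>H. \<exists>y\<in>H. mat2_mult x y = mat2_one \<and> mat2_mult y x = mat2_one)}"

definition GE2_ring :: "'a::comm_ring_1 itself \<Rightarrow> bool" where
  "GE2_ring _ \<longleftrightarrow> (GE2 :: 'a mat2 set) = GL2"

definition unimod_rows :: "('a::comm_ring_1 \<times> 'a) set" where
  "unimod_rows = {(a, b). \<exists>x y. a*x + b*y = 1}"

definition unit_equiv :: "(('a::comm_ring_1 \<times> 'a) \<times> ('a \<times> 'a)) set" where
  "unit_equiv = {(u, v). u \<in> unimod_rows \<and> v \<in> unimod_rows \<and>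
                  (\<exists>c. c dvd 1 \<and> v = (c * fst u, c * snd u))}"

definition Gamma_V :: "('a::comm_ring_1 \<times> 'a) set set" where
  "Gamma_V = unimod_rows // unit_equiv"

definition Gamma_E :: "(('a::comm_ring_1 \<times> 'a) set \<times> ('a \<times> 'a) set) set" where
  "Gamma_E = {(X, Y). X \<in> Gamma_V \<and> Y \<in> Gamma_V \<and>
      (\<exists>u\<in>X. \<exists>v\<in>Y. M2 (fst u) (snd u) (fst v) (snd v) \<in> GL2)}"

definition Gamma_path_connected :: "'a::comm_ring_1 itself \<Rightarrow> bool" where
  "Gamma_path_connected _ \<longleftrightarrow>
     (\<forall>X \<in> (Gamma_V :: ('a \<times> 'a) set set). \<forall>Y \<in> Gamma_V. (X, Y) \<in> Gamma_E\<^sup>*)"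

end

theory Submission
  imports Defs
begin

fun row1 :: "'a mat2 \<Rightarrow> 'a \<times> 'a" where
  "row1 (M2 a b c d) = (a, b)"

lemma unit_mult: "u dvd 1 \<Longrightarrow> v dvd 1 \<Longrightarrow> u*v dvd (1::'a::comm_ring_1)"
  using mult_dvd_mono[of u 1 v 1] by simp

lemma mult_assoc2:
  "mat2_mult (mat2_mult x y) z = mat2_mult x (mat2_mult (y::'a::comm_ring_1 mat2) z)"
  by (cases x; cases y; cases z) (simp add: algebra_simps)

lemma mult_one_left [simp]: "mat2_mult mat2_one (m::'a::comm_ring_1 mat2) = m"
  by (cases m) (simp add: mat2_one_def)

lemma mult_one_right [simp]: "mat2_mult (m::'a::comm_ring_1 mat2) mat2_one = m"
  by (cases m) (simp add: mat2_one_def)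

lemma det_mult: "det2 (mat2_mult m (n::'a::comm_ring_1 mat2)) = det2 m * det2 n"
  by (cases m; cases n) (simp add: algebra_simps)

lemma GL2_iff: "(m::'a::comm_ring_1 mat2) \<in> GL2 \<longleftrightarrow> det2 m dvd 1"
proof
  assume "m \<in> GL2"
  then obtain m' where "mat2_mult m m' = mat2_one" unfolding GL2_def by blast
  then have "det2 m * det2 m' = 1" using det_mult[of m m'] by (simp add: mat2_one_def)
  then show "det2 m dvd 1" by (metis dvdI)
next
  assume "det2 m dvd 1"
  obtain a b c d where m: "m = M2 a b c d" by (cases m)
  obtain e where e: "1 = (a*d - b*c) * e" using \<open>det2 m dvd 1\<close> m by (auto elim: dvdE)
  let ?m' = "M2 (e*d) (-(e*b)) (-(e*c)) (e*a)"
  have "mat2_mult m ?m' = mat2_one"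
    using e unfolding m mat2_one_def by (simp add: algebra_simps)
  moreover have "mat2_mult ?m' m = mat2_one"
    using e unfolding m mat2_one_def by (simp add: algebra_simps)
  ultimately show "m \<in> GL2" unfolding GL2_def by blast
qed

lemma GL2_mult: "x \<in> GL2 \<Longrightarrow> y \<in> GL2 \<Longrightarrow> mat2_mult x (y::'a::comm_ring_1 mat2) \<in> GL2"
  by (simp add: GL2_iff det_mult unit_mult)

lemma one_GL2: "(mat2_one::'a::comm_ring_1 mat2) \<in> GL2"
  by (simp add: GL2_iff mat2_one_def)

lemma gens_GL2: "(GE2_gens::'a::comm_ring_1 mat2 set) \<subseteq> GL2"
  by (auto simp: GE2_gens_def GL2_iff intro: unit_mult)

lemma GL2_family:
  "(GL2::'a::comm_ring_1 mat2 set) \<in> {H. H \<subseteq> GL2 \<and> mat2_one \<in> H \<and> GE2_gens \<subseteq> H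
              \<and> (\<forall>x\<in>H. \<forall>y\<in>H. mat2_mult x y \<in> H)
              \<and> (\<forall>x\<in>H. \<exists>y\<in>H. mat2_mult x y = mat2_one \<and> mat2_mult y x = mat2_one)}"
proof -
  have "\<forall>x\<in>(GL2::'a mat2 set). \<exists>y\<in>GL2. mat2_mult x y = mat2_one \<and> mat2_mult y x = mat2_one"
  proof
    fix x :: "'a mat2" assume "x \<in> GL2"
    then obtain y where "mat2_mult x y = mat2_one" "mat2_mult y x = mat2_one" unfolding GL2_def by blast
    moreover then have "y \<in> GL2" unfolding GL2_def by blast
    ultimately show "\<exists>y\<in>GL2. mat2_mult x y = mat2_one \<and> mat2_mult y x = mat2_one" by blast
  qed
  then show ?thesis using one_GL2 gens_GL2 GL2_mult by blast
qed

lemma GE2_GL2: "(GE2::'a::comm_ring_1 mat2 set) \<subseteq> GL2"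
  unfolding GE2_def using GL2_family by blast

lemma gens_GE2: "(GE2_gens::'a::comm_ring_1 mat2 set) \<subseteq> GE2"
  unfolding GE2_def by blast

lemma one_GE2: "(mat2_one::'a::comm_ring_1 mat2) \<in> GE2"
  unfolding GE2_def by blast

lemma GE2_mult: "x \<in> GE2 \<Longrightarrow> y \<in> GE2 \<Longrightarrow> mat2_mult x (y::'a::comm_ring_1 mat2) \<in> GE2"
  unfolding GE2_def
proof (rule InterI)
  fix H :: "'a mat2 set"
  assume x: "x \<in> \<Inter> {H. H \<subseteq> GL2 \<and> mat2_one \<in> H \<and> GE2_gens \<subseteq> H
              \<and> (\<forall>x\<in>H. \<forall>y\<in>H. mat2_mult x y \<in> H)
              \<and> (\<forall>x\<in>H. \<exists>y\<in>H. mat2_mult x y = mat2_one \<and> mat2_mult y x = mat2_one)}"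
    and y: "y \<in> \<Inter> {H. H \<subseteq> GL2 \<and> mat2_one \<in> H \<and> GE2_gens \<subseteq> H
              \<and> (\<forall>x\<in>H. \<forall>y\<in>H. mat2_mult x y \<in> H)
              \<and> (\<forall>x\<in>H. \<exists>y\<in>H. mat2_mult x y = mat2_one \<and> mat2_mult y x = mat2_one)}"
    and H: "H \<in> {H. H \<subseteq> GL2 \<and> mat2_one \<in> H \<and> GE2_gens \<subseteq> H
              \<and> (\<forall>x\<in>H. \<forall>y\<in>H. mat2_mult x y \<in> H)
              \<and> (\<forall>x\<in>H. \<exists>y\<in>H. mat2_mult x y = mat2_one \<and> mat2_mult y x = mat2_one)}"
  have "x \<in> H" using x H by (rule InterD)
  moreover have "y \<in> H" using y H by (rule InterD)
  moreover have "\<forall>x\<in>H. \<forall>y\<in>H. mat2_mult x y \<in> H" using H by simp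
  ultimately show "mat2_mult x y \<in> H" by blast
qed

lemma E12_GE2: "M2 1 x 0 (1::'a::comm_ring_1) \<in> GE2"
proof -
  have "M2 1 x 0 (1::'a) \<in> GE2_gens" unfolding GE2_gens_def by blast
  then show ?thesis using gens_GE2 by (rule subsetD[rotated])
qed
lemma E21_GE2: "M2 1 0 x (1::'a::comm_ring_1) \<in> GE2"
proof -
  have "M2 1 0 x (1::'a) \<in> GE2_gens" unfolding GE2_gens_def by blast
  then show ?thesis using gens_GE2 by (rule subsetD[rotated])
qed
lemma D_GE2: "u dvd 1 \<Longrightarrow> v dvd 1 \<Longrightarrow> M2 u 0 0 (v::'a::comm_ring_1) \<in> GE2"
proof -
  assume "u dvd 1" "v dvd 1"
  then have "M2 u 0 0 (v::'a) \<in> GE2_gens" unfolding GE2_gens_def by blast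
  then show ?thesis using gens_GE2 by (rule subsetD[rotated])
qed

lemma swap_GE2: "M2 0 1 1 (0::'a::comm_ring_1) \<in> GE2"
proof -
  have "mat2_mult (M2 1 0 0 (-1)) (mat2_mult (M2 1 1 0 1) (mat2_mult (M2 1 0 (-1) 1) (M2 1 1 0 1))) \<in> (GE2::'a mat2 set)"
    by (intro GE2_mult E12_GE2 E21_GE2 D_GE2) simp_all
  then show ?thesis by simp
qed

definition cls :: "('a::comm_ring_1 \<times> 'a) \<Rightarrow> ('a \<times> 'a) set" where
  "cls u = unit_equiv `` {u}"

lemma mem_cls: "v \<in> cls u \<longleftrightarrow> u \<in> unimod_rows \<and> v \<in> unimod_rows \<and>
   (\<exists>c. c dvd 1 \<and> v = (c * fst u, c * snd u))"
  by (simp add: cls_def unit_equiv_def)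

lemma self_cls: "u \<in> unimod_rows \<Longrightarrow> u \<in> cls u"
  by (auto simp: mem_cls intro!: exI[of _ 1])

lemma cls_V: "u \<in> unimod_rows \<Longrightarrow> cls u \<in> Gamma_V"
  unfolding Gamma_V_def cls_def by (rule quotientI)

lemma V_cls: "X \<in> Gamma_V \<Longrightarrow> \<exists>u\<in>unimod_rows. X = cls u"
  unfolding Gamma_V_def cls_def by (auto elim: quotientE)

lemma unimod_scale: "(a, b) \<in> unimod_rows \<Longrightarrow> c dvd 1 \<Longrightarrow> (c*a, c*b) \<in> (unimod_rows::('a::comm_ring_1\<times>'a) set)"
proof -
  assume "(a, b) \<in> unimod_rows" "c dvd 1"
  then obtain x y where xy: "a*x + b*y = 1" unfolding unimod_rows_def by blast
  obtain c' where c': "1 = c * c'" using \<open>c dvd 1\<close> by (auto elim: dvdE)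
  have "(c*a)*(c'*x) + (c*b)*(c'*y) = (c*c')*(a*x+b*y)" by (simp add: algebra_simps)
  also have "\<dots> = 1" using xy c' by simp
  finally show ?thesis unfolding unimod_rows_def by blast
qed

lemma cls_scale: "(a, b) \<in> unimod_rows \<Longrightarrow> c dvd 1 \<Longrightarrow> cls (c*a, c*b) = cls (a, (b::'a::comm_ring_1))"
proof -
  assume u: "(a, b) \<in> unimod_rows" and c: "c dvd 1"
  obtain c' where c': "1 = c * c'" using c by (auto elim: dvdE)
  have c'u: "c' dvd 1" using c' by (metis dvdI mult.commute)
  show ?thesis
  proof (rule set_eqI, rule iffI)
    fix w assume "w \<in> cls (c*a, c*b)"
    then obtain d where d: "d dvd 1" "w = (d*(c*a), d*(c*b))" "w \<in> unimod_rows" by (auto simp: mem_cls)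
    then show "w \<in> cls (a, b)" using u c unit_mult[OF d(1) c]
      by (auto simp: mem_cls mult.assoc intro!: exI[of _ "d*c"])
  next
    fix w assume "w \<in> cls (a, b)"
    then obtain d where d: "d dvd 1" "w = (d*a, d*b)" "w \<in> unimod_rows" by (auto simp: mem_cls)
    have "w = ((d*c')*(c*a), (d*c')*(c*b))" using d(2) c'
      by (simp add: algebra_simps) (metis mult.assoc mult.commute mult_1_right)
    then show "w \<in> cls (c*a, c*b)" using d unimod_scale[OF u c] unit_mult[OF d(1) c'u]
      by (auto simp: mem_cls)
  qed
qed

lemma GL2_rows: "M2 a b c d \<in> GL2 \<Longrightarrow> (a, b) \<in> unimod_rows \<and> (c, (d::'a::comm_ring_1)) \<in> unimod_rows"
proof -
  assume "M2 a b c d \<in> GL2"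
  then obtain e where e: "1 = (a*d - b*c) * e" by (auto simp: GL2_iff elim: dvdE)
  have "a*(d*e) + b*(-(c*e)) = 1" using e by (simp add: algebra_simps)
  moreover have "c*(-(b*e)) + d*(a*e) = 1" using e by (simp add: algebra_simps)
  ultimately show ?thesis unfolding unimod_rows_def by blast
qed

lemma GL2_edge: "M2 a b c d \<in> GL2 \<Longrightarrow> (cls (a, b), cls (c, (d::'a::comm_ring_1))) \<in> Gamma_E"
proof -
  assume g: "M2 a b c d \<in> GL2"
  then have r: "(a, b) \<in> unimod_rows" "(c, d) \<in> unimod_rows" using GL2_rows by blast+
  have "(a,b) \<in> cls (a,b)" "(c,d) \<in> cls (c,d)" using r self_cls by blast+
  then have "\<exists>u\<in>cls (a,b). \<exists>v\<in>cls (c,d). M2 (fst u) (snd u) (fst v) (snd v) \<in> GL2"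
    using g by force
  then show ?thesis unfolding Gamma_E_def mem_Collect_eq case_prod_conv using r cls_V by blast
qed

lemma GL2_swap: "M2 a b c d \<in> GL2 \<Longrightarrow> M2 c d a (b::'a::comm_ring_1) \<in> GL2"
proof -
  assume "M2 a b c d \<in> GL2"
  moreover have "c*b - d*a = - (a*d - b*c)" by (simp add: algebra_simps)
  ultimately show ?thesis by (metis GL2_iff det2.simps minus_dvd_iff)
qed

lemma sym_E: "sym (Gamma_E::(('a::comm_ring_1 \<times> 'a) set \<times> ('a \<times> 'a) set) set)"
  unfolding sym_def Gamma_E_def using GL2_swap by fastforce

lemma sym_Estar: "(X, Y) \<in> Gamma_E\<^sup>* \<Longrightarrow> (Y, X) \<in> (Gamma_E::(('a::comm_ring_1 \<times> 'a) set \<times> ('a \<times> 'a) set) set)\<^sup>*"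
  using sym_rtrancl[OF sym_E] unfolding sym_def by blast

definition conn :: "('a::comm_ring_1 \<times> 'a) \<Rightarrow> ('a \<times> 'a) \<Rightarrow> bool" where
  "conn u v \<longleftrightarrow> (cls u, cls v) \<in> Gamma_E\<^sup>*"

lemma conn_refl: "conn u u" by (simp add: conn_def)
lemma conn_sym: "conn u v \<Longrightarrow> conn v u" by (simp add: conn_def sym_Estar)
lemma conn_trans: "conn u v \<Longrightarrow> conn v w \<Longrightarrow> conn u w"
  unfolding conn_def by (meson rtrancl_trans)

lemma E12_conn: "m \<in> GL2 \<Longrightarrow> conn (row1 m) (row1 (mat2_mult (M2 1 x 0 1) (m::'a::comm_ring_1 mat2)))"
proof -
  assume mg: "m \<in> GL2"
  obtain a b c d where m: "m = M2 a b c d" by (cases m)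
  have e1: "(cls (a,b), cls (c,d)) \<in> Gamma_E" using mg m GL2_edge by blast
  have "c*(b + x*d) - d*(a + x*c) = - (a*d - b*c)" by (simp add: algebra_simps)
  then have "M2 c d (a + x*c) (b + x*d) \<in> GL2" using mg m by (metis GL2_iff det2.simps minus_dvd_iff)
  then have e2: "(cls (c,d), cls (a + x*c, b + x*d)) \<in> Gamma_E" using GL2_edge by blast
  have "mat2_mult (M2 1 x 0 1) m = M2 (a + x*c) (b + x*d) c d" by (simp add: m)
  then show ?thesis using e1 e2 m unfolding conn_def by simp
qed

lemma E21_conn: "conn (row1 m) (row1 (mat2_mult (M2 1 0 x 1) (m::'a::comm_ring_1 mat2)))"
  by (cases m) (simp add: conn_refl)

lemma D_conn: "m \<in> GL2 \<Longrightarrow> u dvd 1 \<Longrightarrow> conn (row1 m) (row1 (mat2_mult (M2 u 0 0 v) (m::'a::comm_ring_1 mat2)))"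
proof -
  assume mg: "m \<in> GL2" and u: "u dvd 1"
  obtain a b c d where m: "m = M2 a b c d" by (cases m)
  have "(a,b) \<in> unimod_rows" using GL2_rows mg m by blast
  then have "cls (u*a, u*b) = cls (a,b)" using cls_scale u by blast
  then show ?thesis by (simp add: m conn_def)
qed

lemma GE2_sub_H: "(GE2::'a::comm_ring_1 mat2 set) \<subseteq> {g \<in> GL2. \<forall>m\<in>GL2. conn (row1 m) (row1 (mat2_mult g m))}"
  (is "_ \<subseteq> ?H")
proof -
  have f1: "?H \<subseteq> GL2" by blast
  have f2: "mat2_one \<in> ?H" using one_GL2 by (simp add: conn_refl)
  have f3: "GE2_gens \<subseteq> ?H"
  proof
    fix g :: "'a mat2" assume g: "g \<in> GE2_gens"
    then have gG: "g \<in> GL2" using gens_GL2 by (rule subsetD[rotated])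
    from g consider x where "g = M2 1 x 0 1" | x where "g = M2 1 0 x 1"
      | u v where "g = M2 u 0 0 v" "u dvd 1" "v dvd 1" unfolding GE2_gens_def by blast
    then show "g \<in> ?H"
    proof cases
      case 1 then show ?thesis using gG by (simp add: E12_conn)
    next
      case 2 then show ?thesis using gG by (simp add: E21_conn)
    next
      case 3 then show ?thesis using gG by (simp add: D_conn)
    qed
  qed
  have f4: "\<forall>x\<in>?H. \<forall>y\<in>?H. mat2_mult x y \<in> ?H"
  proof (intro ballI)
    fix x y assume x: "x \<in> ?H" and y: "y \<in> ?H"
    have "\<forall>m\<in>GL2. conn (row1 m) (row1 (mat2_mult (mat2_mult x y) m))"
    proof
      fix m :: "'a mat2" assume m: "m \<in> GL2"
      have "conn (row1 m) (row1 (mat2_mult y m))" using y m by blast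
      moreover have "conn (row1 (mat2_mult y m)) (row1 (mat2_mult x (mat2_mult y m)))"
        using x y m GL2_mult by blast
      ultimately show "conn (row1 m) (row1 (mat2_mult (mat2_mult x y) m))"
        by (simp add: mult_assoc2 conn_trans)
    qed
    then show "mat2_mult x y \<in> ?H" using x y GL2_mult by blast
  qed
  have f5: "\<forall>x\<in>?H. \<exists>y\<in>?H. mat2_mult x y = mat2_one \<and> mat2_mult y x = mat2_one"
  proof
    fix x assume x: "x \<in> ?H"
    then obtain y where xy: "mat2_mult x y = mat2_one" "mat2_mult y x = mat2_one" unfolding GL2_def by blast
    then have yg: "y \<in> GL2" unfolding GL2_def by blast
    have "\<forall>m\<in>GL2. conn (row1 m) (row1 (mat2_mult y m))"
    proof
      fix m :: "'a mat2" assume m: "m \<in> GL2"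
      have "conn (row1 (mat2_mult y m)) (row1 (mat2_mult x (mat2_mult y m)))"
        using x yg m GL2_mult by blast
      then show "conn (row1 m) (row1 (mat2_mult y m))"
        by (simp add: mult_assoc2[symmetric] xy conn_sym)
    qed
    then show "\<exists>y\<in>?H. mat2_mult x y = mat2_one \<and> mat2_mult y x = mat2_one" using xy yg by blast
  qed
  show ?thesis unfolding GE2_def
    by (intro Inter_lower CollectI conjI f1 f2 f3 f4 f5)
qed

lemma lowtri_GE2: "M2 c 0 s t \<in> GL2 \<Longrightarrow> c dvd 1 \<Longrightarrow> M2 c 0 s (t::'a::comm_ring_1) \<in> GE2"
proof -
  assume L: "M2 c 0 s t \<in> GL2" and c: "c dvd 1"
  then have "c * t dvd 1" by (simp add: GL2_iff)
  then have t: "t dvd 1" using dvd_mult_right by blast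
  obtain c' where c': "1 = c * c'" using c by (auto elim: dvdE)
  have "mat2_mult (M2 1 0 (s*c') 1) (M2 c 0 0 t) = M2 c 0 (s*(c*c')) t" by (simp add: algebra_simps)
  also have "\<dots> = M2 c 0 s t" using c' by simp
  finally show ?thesis using GE2_mult E21_GE2 D_GE2[OF c t] by metis
qed

lemma lemma_L:
  assumes g: "g \<in> GL2" and h: "h \<in> GE2" and c: "c dvd 1"
    and r: "row1 g = (c * fst (row1 h), c * snd (row1 (h::'a::comm_ring_1 mat2)))"
  shows "g \<in> GE2"
proof -
  have "h \<in> GL2" using h GE2_GL2 by blast
  then obtain h' where hh: "mat2_mult h h' = mat2_one" "mat2_mult h' h = mat2_one" unfolding GL2_def by blast
  have h'g: "h' \<in> GL2" using hh unfolding GL2_def by blast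
  obtain g1 g2 g3 g4 where gm: "g = M2 g1 g2 g3 g4" by (cases g)
  obtain a b h3 h4 where hm: "h = M2 a b h3 h4" by (cases h)
  obtain p q r' s where hm': "h' = M2 p q r' s" by (cases h')
  have e1: "a*p + b*r' = 1" and e2: "a*q + b*s = 0" using hh(1) hm hm' by (simp_all add: mat2_one_def)
  have g12: "g1 = c*a" "g2 = c*b" using r gm hm by simp_all
  have "mat2_mult g h' = M2 (c*(a*p + b*r')) (c*(a*q + b*s)) (g3*p + g4*r') (g3*q + g4*s)"
    using gm hm' g12 by (simp add: algebra_simps)
  also have "\<dots> = M2 c 0 (g3*p + g4*r') (g3*q + g4*s)" using e1 e2 by simp
  finally have Leq: "mat2_mult g h' = M2 c 0 (g3*p + g4*r') (g3*q + g4*s)" .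
  have "mat2_mult g h' \<in> GL2" using g h'g GL2_mult by blast
  then have "mat2_mult g h' \<in> GE2" using Leq lowtri_GE2 c by metis
  then have "mat2_mult (mat2_mult g h') h \<in> GE2" using h GE2_mult by blast
  then show ?thesis by (simp add: mult_assoc2 hh)
qed

lemma path_GE2:
  assumes "(cls (1, 0), Y) \<in> (Gamma_E::(('a::comm_ring_1 \<times> 'a) set \<times> ('a \<times> 'a) set) set)\<^sup>*"
  shows "\<exists>h\<in>GE2. row1 h \<in> Y"
  using assms
proof (induction rule: rtrancl_induct)
  case base
  have "(1::'a, 0::'a) \<in> unimod_rows" unfolding unimod_rows_def by (auto intro!: exI[of _ 1])
  then have "row1 (mat2_one::'a mat2) \<in> cls (1,0)" by (simp add: mat2_one_def self_cls)
  then show ?case using one_GE2 by blast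
next
  case (step X Y)
  then obtain h where h: "h \<in> GE2" "row1 h \<in> X" by blast
  from step(2) obtain u v where uv: "X \<in> Gamma_V" "Y \<in> Gamma_V" "u \<in> X" "v \<in> Y"
    "M2 (fst u) (snd u) (fst v) (snd v) \<in> GL2" unfolding Gamma_E_def by blast
  obtain z where z: "X = cls z" using V_cls uv(1) by blast
  obtain c where c: "c dvd 1" "row1 h = (c * fst z, c * snd z)" using h(2) z by (auto simp: mem_cls)
  obtain d where d: "d dvd 1" "u = (d * fst z, d * snd z)" using uv(3) z by (auto simp: mem_cls)
  obtain c' where c': "1 = c * c'" using c by (auto elim: dvdE)
  have c'u: "c' dvd 1" using c' by (metis dvdI mult.commute)
  have "u = ((d*c') * fst (row1 h), (d*c') * snd (row1 h))"
    using c(2) d(2) c' by (simp add: algebra_simps) (metis mult.assoc mult.commute mult_1_right)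
  then have n: "M2 (fst u) (snd u) (fst v) (snd v) \<in> GE2"
    using lemma_L[OF uv(5) h(1) unit_mult[OF d(1) c'u]] by simp
  have "mat2_mult (M2 0 1 1 0) (M2 (fst u) (snd u) (fst v) (snd v)) \<in> GE2"
    using GE2_mult[OF swap_GE2 n] .
  moreover have "row1 (mat2_mult (M2 0 1 1 0) (M2 (fst u) (snd u) (fst v) (snd v))) = v" by simp
  ultimately show ?case using uv(4) by metis
qed

theorem corollary3p5:
  shows "GE2_ring TYPE('a::comm_ring_1) \<longleftrightarrow> Gamma_path_connected TYPE('a)"
proof
  assume "GE2_ring TYPE('a)"
  then have eq: "(GE2::'a mat2 set) = GL2" by (simp add: GE2_ring_def)
  have base: "conn (1::'a, 0) u" if u: "u \<in> unimod_rows" for u :: "'a \<times> 'a"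
  proof -
    obtain a b where ab: "u = (a, b)" by (cases u)
    obtain p q where pq: "a*p + b*q = 1" using u ab unfolding unimod_rows_def by blast
    have "det2 (M2 a b (-q) p) = 1" using pq by (simp add: algebra_simps)
    then have "M2 a b (-q) p \<in> GL2" by (simp add: GL2_iff)
    then have "M2 a b (-q) p \<in> GE2" using eq by simp
    then have "conn (row1 (mat2_one::'a mat2)) (row1 (mat2_mult (M2 a b (-q) p) mat2_one))"
      using GE2_sub_H one_GL2 by blast
    then show ?thesis by (simp add: mat2_one_def ab)
  qed
  show "Gamma_path_connected TYPE('a)" unfolding Gamma_path_connected_def
  proof (intro ballI)
    fix X Y :: "('a \<times> 'a) set" assume "X \<in> Gamma_V" "Y \<in> Gamma_V"
    then obtain u v where "u \<in> unimod_rows" "v \<in> unimod_rows" "X = cls u" "Y = cls v"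
      using V_cls by metis
    then show "(X, Y) \<in> Gamma_E\<^sup>*"
      using base conn_sym conn_trans unfolding conn_def by metis
  qed
next
  assume conn: "Gamma_path_connected TYPE('a)"
  have "(GL2::'a mat2 set) \<subseteq> GE2"
  proof
    fix g :: "'a mat2" assume g: "g \<in> GL2"
    obtain a b c d where gm: "g = M2 a b c d" by (cases g)
    have u: "(a, b) \<in> unimod_rows" using GL2_rows g gm by blast
    have e: "(1::'a, 0::'a) \<in> unimod_rows" unfolding unimod_rows_def by (auto intro!: exI[of _ 1])
    have "(cls (1::'a, 0::'a), cls (a, b)) \<in> Gamma_E\<^sup>*"
      using conn cls_V[OF u] cls_V[OF e] unfolding Gamma_path_connected_def by blast
    then obtain h where h: "h \<in> GE2" "row1 h \<in> cls (a, b)" using path_GE2 by blast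
    then obtain e where e: "e dvd 1" "row1 h = (e*a, e*b)" by (auto simp: mem_cls)
    obtain e' where e': "1 = e * e'" using e by (auto elim: dvdE)
    have e'u: "e' dvd 1" using e' by (metis dvdI mult.commute)
    have "row1 g = (e' * fst (row1 h), e' * snd (row1 h))"
      using gm e(2) e' by (simp add: algebra_simps)
    then show "g \<in> GE2" using lemma_L[OF g h(1) e'u] by blast
  qed
  then show "GE2_ring TYPE('a)" using GE2_GL2 by (auto simp: GE2_ring_def)
qed

end
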